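(* Let $x=[x_1^T~x_2^T]^T$ with $x_1\in\mathbb C^n$, $x_2\in\mathbb C^m$; let $y,z\in\mathbb C^n$; and let $w=[w_1^T~w_2^T]^T$ with $w_1\in\mathbb C^n$, $w_2\in\mathbb C^m$. Define \[ \mathcal S_d^{\mathrm{Sym}}:=\{\Delta=[\Delta_1~\Delta_2]:\ \Delta_1\in\mathbb C^{n,n},\ \Delta_2\in\mathbb C^{n,m},\ \Delta_1^T=\Delta_1,\ \Delta x=y,\ \Delta^*z=w\}. \] Then $\mathcal S_d^{\mathrm{Sym}}\neq\emptyset$ if and only if $x^*w=y^*z$. If this holds, then \[ \mathcal S_d^{\mathrm{Sym}}=\{H+\widetilde H(K,R):\ K\in\mathbb C^{n,n},\ K^T=K,\ R\in\mathbb C^{n,m}\}, \] where $H=[H_1~H_2]$, $\widetilde H(K,R)=[\widetilde H_1(K)~\widetilde H_2(K,R)]$ with \begin{align*} H_1&=\bar w_1\bar z^\dagger+(\bar w_1\bar z^\dagger)^T-(\bar z^\dagger)^T\bar z^T\bar w_1\bar z^\dagger,\\ H_2&=yx_2^\dagger-H_1x_1x_2^\dagger+(w_2z^\dagger)^*\mathcal P_{x_2},\\ \widetilde H_1(K)&=(\mathcal P_{\bar z})^TK\mathcal P_{\bar z},\\ \widetilde H_2(K,R)&=\mathcal P_zR\mathcal P_{x_2}-(\mathcal P_{\bar z})^TK\mathcal P_{\bar z}x_1x_2^\dagger, \end{align*} and \[ \inf_{\Delta\in\mathcal S_d^{\mathrm{Sym}}}\|\Delta\|_F^2\ \ge\ \|H_1\|_F^2+\inf_{K\in\mathbb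 C^{n,n},\,K^T=K}\|H_2+\widetilde H_2(K,0)\|_F^2 . \] Moreover, if $x_1=\alpha\bar z$ for some nonzero $\alpha\in\mathbb C$, then equality holds and $\inf_{\Delta\in\mathcal S_d^{\mathrm{Sym}}}\|\Delta\|_F^2=\|H_1\|_F^2+\|H_2\|_F^2$, the infimum being uniquely attained by $H$.
   Context: $\bar v$ denotes entrywise complex conjugation. $A^\dagger$ is the Moore–Penrose pseudoinverse; for a vector $v$, $v^\dagger=v^*/\|v\|^2$ if $v\ne0$ and $0$ if $v=0$. For a matrix or vector $X$ with $n$ rows, $\mathcal P_X=I-XX^\dagger$. $\|\cdot\|_F$ is the Frobenius norm. *)

theory Defs
  imports "HOL-Analysis.Analysis"
begin

text \<open>Matrices with r rows and c columns have type complex^'c^'r.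
  The Frobenius norm of a matrix is the library norm on complex^'c^'r (Euclidean norm
  of all entries).\<close>

definition cconj :: "complex^'n \<Rightarrow> complex^'n" where
  "cconj v = (\<chi> i. cnj (v $ i))"

definition colm :: "complex^'n \<Rightarrow> complex^1^'n" where
  "colm v = (\<chi> i j. v $ i)"

definition ctrans :: "complex^'c^'r \<Rightarrow> complex^'r^'c" where
  "ctrans A = (\<chi> i j. cnj (A $ j $ i))"

definition vdag :: "complex^'n \<Rightarrow> complex^'n^1" where
  "vdag v = (if v = 0 then 0 else (\<chi> i j. cnj (v $ j) / complex_of_real ((norm v)\<^sup>2)))"

definition Pr :: "complex^'n \<Rightarrow> complex^'n^'n" where
  "Pr v = mat 1 - colm v ** vdag v"

definition cip :: "complex^'n \<Rightarrow> complex^'n \<Rightarrow> complex" where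
  "cip a b = (\<Sum>i\<in>UNIV. cnj (a $ i) * b $ i)"

text \<open>The set S_d^Sym; a matrix Delta = [Delta1 Delta2] is represented by the pair of blocks.\<close>
definition Ssym :: "complex^'n \<Rightarrow> complex^'m \<Rightarrow> complex^'n \<Rightarrow> complex^'n \<Rightarrow> complex^'n
    \<Rightarrow> complex^'m \<Rightarrow> ((complex^'n^'n) \<times> (complex^'m^'n)) set" where
  "Ssym x1 x2 y z w1 w2 = {(D1, D2). transpose D1 = D1 \<and> D1 *v x1 + D2 *v x2 = y
      \<and> ctrans D1 *v z = w1 \<and> ctrans D2 *v z = w2}"

definition frob2 :: "(complex^'n^'k) \<times> (complex^'m^'k) \<Rightarrow> real" where
  "frob2 D = (norm (fst D))\<^sup>2 + (norm (snd D))\<^sup>2"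

definition H1 :: "complex^'n \<Rightarrow> complex^'n \<Rightarrow> complex^'n^'n" where
  "H1 z w1 = colm (cconj w1) ** vdag (cconj z) + transpose (colm (cconj w1) ** vdag (cconj z))
     - transpose (vdag (cconj z)) ** transpose (colm (cconj z)) ** colm (cconj w1) ** vdag (cconj z)"

definition H2 :: "complex^'n \<Rightarrow> complex^'m \<Rightarrow> complex^'n \<Rightarrow> complex^'n \<Rightarrow> complex^'n
    \<Rightarrow> complex^'m \<Rightarrow> complex^'m^'n" where
  "H2 x1 x2 y z w1 w2 = colm y ** vdag x2 - H1 z w1 ** colm x1 ** vdag x2
     + ctrans (colm w2 ** vdag z) ** Pr x2"

definition Ht1 :: "complex^'n \<Rightarrow> complex^'n^'n \<Rightarrow> complex^'n^'n" where
  "Ht1 z K = transpose (Pr (cconj z)) ** K ** Pr (cconj z)"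

definition Ht2 :: "complex^'n \<Rightarrow> complex^'m \<Rightarrow> complex^'n \<Rightarrow> complex^'n^'n \<Rightarrow> complex^'m^'n
    \<Rightarrow> complex^'m^'n" where
  "Ht2 x1 x2 z K R = Pr z ** R ** Pr x2
     - transpose (Pr (cconj z)) ** K ** Pr (cconj z) ** colm x1 ** vdag x2"

end

theory Submission
  imports Defs
begin


definition bil :: "complex^'n \<Rightarrow> complex^'n \<Rightarrow> complex" where
  "bil a b = (\<Sum>i\<in>UNIV. a $ i * b $ i)"

lemma cconj_nth[simp]: "cconj v $ i = cnj (v $ i)" by (simp add: cconj_def)
lemma cconj_cconj[simp]: "cconj (cconj v) = v" by (simp add: vec_eq_iff)
lemma cconj_add[simp]: "cconj (a + b) = cconj a + cconj b" by (simp add: vec_eq_iff)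
lemma cconj_diff[simp]: "cconj (a - b) = cconj a - cconj b" by (simp add: vec_eq_iff)
lemma cconj_smult[simp]: "cconj (c *s b) = cnj c *s cconj b" by (simp add: vec_eq_iff)
lemma cconj_0[simp]: "cconj 0 = 0" by (simp add: vec_eq_iff)
lemma cconj_eq_iff[simp]: "cconj a = cconj b \<longleftrightarrow> a = b"
  by (simp add: vec_eq_iff)
lemma cconj_eq_0[simp]: "cconj a = 0 \<longleftrightarrow> a = 0"
  by (simp add: vec_eq_iff)

lemma norm_sq_vec: "(norm (v::'a::real_normed_vector^'n))\<^sup>2 = (\<Sum>i\<in>UNIV. (norm (v$i))\<^sup>2)"
  by (simp add: norm_vec_def L2_set_def sum_nonneg)

lemma norm_cconj[simp]: "norm (cconj v) = norm v"
  by (simp add: norm_vec_def)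

lemma cnj_mult_self: "cnj a * a = complex_of_real ((cmod a)\<^sup>2)"
  using complex_norm_square[of a] by (simp add: mult.commute)

lemma cip_self: "cip v v = of_real ((norm v)\<^sup>2)"
proof -
  have "cip v v = (\<Sum>i\<in>UNIV. of_real ((cmod (v$i))\<^sup>2))"
    unfolding cip_def by (intro sum.cong refl) (rule cnj_mult_self)
  also have "\<dots> = of_real ((norm v)\<^sup>2)" by (simp add: norm_sq_vec)
  finally show ?thesis .
qed

lemma bil_cconj_self: "bil v (cconj v) = of_real ((norm v)\<^sup>2)"
proof -
  have "bil v (cconj v) = cip v v" by (simp add: bil_def cip_def mult.commute)
  then show ?thesis by (simp add: cip_self)
qed
lemma bil_cconj_self2: "bil (cconj v) v = of_real ((norm v)\<^sup>2)"
proof -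
  have "bil (cconj v) v = cip v v" by (simp add: bil_def cip_def)
  then show ?thesis by (simp add: cip_self)
qed

lemma cip_cconj1[simp]: "cip (cconj a) b = bil a b" by (simp add: cip_def bil_def)
lemma bil_cconj1[simp]: "bil (cconj a) b = cip a b" by (simp add: cip_def bil_def)
lemma cip_cconj2[simp]: "cip a (cconj b) = cnj (bil a b)" by (simp add: cip_def bil_def)
lemma bil_comm: "bil a b = bil b a" by (simp add: bil_def mult.commute)
lemma cnj_cip: "cnj (cip a b) = cip b a" by (simp add: cip_def mult.commute)

lemma cip_add1[simp]: "cip (a + b) c = cip a c + cip b c" by (simp add: cip_def sum.distrib algebra_simps)
lemma cip_add2[simp]: "cip c (a + b) = cip c a + cip c b" by (simp add: cip_def sum.distrib algebra_simps)
lemma cip_diff1[simp]: "cip (a - b) c = cip a c - cip b c" by (simp add: cip_def sum_subtractf algebra_simps)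
lemma cip_diff2[simp]: "cip c (a - b) = cip c a - cip c b" by (simp add: cip_def sum_subtractf algebra_simps)
lemma cip_smult1[simp]: "cip (s *s a) c = cnj s * cip a c" by (simp add: cip_def sum_distrib_left algebra_simps)
lemma cip_smult2[simp]: "cip c (s *s a) = s * cip c a" by (simp add: cip_def sum_distrib_left algebra_simps)
lemma cip_zero[simp]: "cip 0 c = 0" "cip c 0 = 0" by (simp_all add: cip_def)
lemma bil_add1[simp]: "bil (a + b) c = bil a c + bil b c" by (simp add: bil_def sum.distrib algebra_simps)
lemma bil_add2[simp]: "bil c (a + b) = bil c a + bil c b" by (simp add: bil_def sum.distrib algebra_simps)
lemma bil_diff1[simp]: "bil (a - b) c = bil a c - bil b c" by (simp add: bil_def sum_subtractf algebra_simps)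
lemma bil_diff2[simp]: "bil c (a - b) = bil c a - bil c b" by (simp add: bil_def sum_subtractf algebra_simps)
lemma bil_smult1[simp]: "bil (s *s a) c = s * bil a c" by (simp add: bil_def sum_distrib_left algebra_simps)
lemma bil_smult2[simp]: "bil c (s *s a) = s * bil c a" by (simp add: bil_def sum_distrib_left algebra_simps)
lemma bil_zero[simp]: "bil 0 c = 0" "bil c 0 = 0" by (simp_all add: bil_def)

abbreviation nn :: "complex^'n \<Rightarrow> complex" where "nn v \<equiv> of_real ((norm v)\<^sup>2)"

lemma vdag_nth[simp]: "vdag b $ i $ j = cnj (b $ j) / nn b"
  by (simp add: vdag_def)

lemma colm_nth[simp]: "colm a $ i $ j = a $ i" by (simp add: colm_def)

lemma colm_mv[simp]: "colm a *v (s::complex^1) = s$1 *s a"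
  by (simp add: vec_eq_iff matrix_vector_mult_def sum_1 mult.commute)
lemma vdag_mv[simp]: "vdag b *v x = (\<chi> _. cip b x / nn b)"
  by (simp add: vec_eq_iff matrix_vector_mult_def cip_def sum_divide_distrib)
lemma Pr_mv[simp]: "Pr b *v x = x - (cip b x / nn b) *s b"
  unfolding Pr_def by (simp add: matrix_vector_mult_diff_rdistrib matrix_vector_mul_assoc[symmetric])
lemma ctr_mv[simp]: "ctrans (colm a ** vdag b) *v x = (cip a x / nn b) *s b"
  by (simp add: vec_eq_iff matrix_vector_mult_def matrix_matrix_mult_def ctrans_def cip_def
     sum_1 sum_divide_distrib sum_distrib_left algebra_simps)

lemma vm_colm[simp]: "x v* colm a = (\<chi> _. bil x a)"
  by (simp add: vec_eq_iff vector_matrix_mult_def bil_def)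
lemma vm_vdag[simp]: "(s::complex^1) v* vdag b = (s$1 / nn b) *s cconj b"
  by (simp add: vec_eq_iff vector_matrix_mult_def sum_1)
lemma vm_Pr[simp]: "x v* Pr b = x - (bil x b / nn b) *s cconj b"
  unfolding Pr_def by (simp add: vector_matrix_mult_diff_rdistrib vector_matrix_mul_assoc[symmetric])
lemma vm_ctr[simp]: "x v* ctrans (colm a ** vdag b) = (bil x b / nn b) *s cconj a"
  by (simp add: vec_eq_iff vector_matrix_mult_def matrix_matrix_mult_def ctrans_def bil_def
     sum_1 sum_divide_distrib sum_distrib_left algebra_simps)

lemma mv_smult[simp]: "A *v (c *s x) = c *s (A *v (x::complex^_))"
  by (simp add: vec_eq_iff matrix_vector_mult_def sum_distrib_left algebra_simps)
lemma vm_smult[simp]: "(c *s x) v* A = c *s ((x::complex^_) v* A)"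
  by (simp add: vec_eq_iff vector_matrix_mult_def sum_distrib_left algebra_simps)

lemma ctrans_mv: "ctrans A *v z = cconj (cconj z v* A)"
  by (simp add: vec_eq_iff matrix_vector_mult_def vector_matrix_mult_def ctrans_def mult.commute)

lemma bil_mv: "bil (A *v x) y = bil x (y v* A)"
  unfolding bil_def matrix_vector_mult_def vector_matrix_mult_def
  by (simp add: sum_distrib_left sum_distrib_right algebra_simps) (rule sum.swap)
lemma cip_mv: "cip z (A *v x) = cip (ctrans A *v z) x"
  unfolding cip_def matrix_vector_mult_def ctrans_def
  by (simp add: sum_distrib_left sum_distrib_right algebra_simps) (rule sum.swap)



lemma bil_cconj2[simp]: "bil a (cconj b) = cip b a" by (simp add: cip_def bil_def mult.commute)

lemmas mvsimps = matrix_vector_mult_diff_rdistrib matrix_vector_mult_add_rdistrib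
  matrix_vector_mul_assoc[symmetric] vector_matrix_mul_assoc[symmetric]
  vector_matrix_mult_add_rdistrib vector_matrix_mult_diff_rdistrib
  matrix_vector_right_distrib matrix_vector_mult_diff_distrib
  vector_matrix_left_distrib vector_matrix_mult_diff_distrib
  bil_cconj_self bil_cconj_self2 cip_self bil_comm

lemma H1_u: assumes "z \<noteq> 0" shows "H1 z w1 *v cconj z = cconj w1"
  using assms unfolding H1_def
  by (simp add: mvsimps vec_eq_iff field_simps power2_eq_square)

lemma H1_T: "transpose (H1 z w1) = H1 z w1"
  unfolding H1_def matrix_eq
  by (simp add: mvsimps vec_eq_iff field_simps power2_eq_square)

lemma PHP: assumes "z \<noteq> 0" shows "transpose (Pr (cconj z)) ** H1 z w1 ** Pr (cconj z) = 0"
  using assms unfolding H1_def matrix_eq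
  by (simp add: mvsimps vec_eq_iff field_simps power2_eq_square)



lemma Pr_self: assumes "b \<noteq> 0" shows "Pr b *v b = 0"
proof -
  have "nn b \<noteq> 0" using assms by simp
  then show ?thesis by (simp add: cip_self)
qed

lemma vm_Pr_self: assumes "b \<noteq> 0" shows "cconj b v* Pr b = 0"
proof -
  have "nn b \<noteq> 0" using assms by simp
  then show ?thesis by (simp add: cip_self)
qed

lemma vdag_self: assumes "b \<noteq> 0" shows "vdag b *v b = (\<chi> _. 1)"
proof -
  have "nn b \<noteq> 0" using assms by simp
  then show ?thesis by (simp add: cip_self)
qed

lemma uPt: assumes "z \<noteq> 0" shows "cconj z v* transpose (Pr (cconj z)) = 0"
  using Pr_self[of "cconj z"] assms by simp

lemma H1_left: assumes "z \<noteq> 0" shows "cconj z v* H1 z w1 = cconj w1"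
proof -
  have "cconj z v* H1 z w1 = transpose (H1 z w1) *v cconj z"
    by (simp only: transpose_matrix_vector)
  also have "\<dots> = cconj w1" unfolding H1_T using H1_u[OF assms] .
  finally show ?thesis .
qed

lemma Ht1_T: "transpose K = K \<Longrightarrow> transpose (Ht1 z K) = Ht1 z K"
  unfolding Ht1_def by (simp add: matrix_transpose_mul matrix_mul_assoc)

lemma Ht1_left: assumes "z \<noteq> 0" shows "cconj z v* Ht1 z K = 0"
  unfolding Ht1_def by (simp only: vector_matrix_mul_assoc[symmetric] uPt[OF assms] vector_matrix_mult_0)

lemma H2_x2: assumes "x2 \<noteq> 0" shows "H2 x1 x2 y z w1 w2 *v x2 = y - H1 z w1 *v x1"
  unfolding H2_def
  by (simp only: mvsimps Pr_self[OF assms] vdag_self[OF assms] matrix_vector_mult_0_right colm_mv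
     vec_lambda_beta vector_smult_lid diff_zero add_0_right)

lemma Ht2_x2: assumes "x2 \<noteq> 0" shows "Ht2 x1 x2 z K R *v x2 = - (Ht1 z K *v x1)"
  unfolding Ht2_def Ht1_def
  by (simp only: mvsimps Pr_self[OF assms] vdag_self[OF assms] matrix_vector_mult_0_right colm_mv
     vec_lambda_beta vector_smult_lid diff_zero add_0_right) simp

lemma Ht2_left: assumes "z \<noteq> 0" shows "cconj z v* Ht2 x1 x2 z K R = 0"
  unfolding Ht2_def
  by (simp only: vector_matrix_mul_assoc[symmetric] uPt[OF assms] vm_Pr_self[OF assms]
     vector_matrix_mult_0 vector_matrix_mult_diff_rdistrib diff_zero)

lemma H2_left: assumes "z \<noteq> 0" "x2 \<noteq> 0" and C: "cip x1 w1 + cip x2 w2 = cip y z"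
  shows "cconj z v* H2 x1 x2 y z w1 w2 = cconj w2"
proof -
  have C': "cip z y = cip w1 x1 + cip w2 x2"
    using arg_cong[OF C, of cnj] by (simp add: cnj_cip)
  have n: "norm z \<noteq> 0" "norm x2 \<noteq> 0" using assms by auto
  show ?thesis
    using n unfolding H2_def
    by (simp add: mvsimps vec_eq_iff field_simps power2_eq_square H1_left[OF assms(1)] C' del: norm_eq_zero)
qed



lemma mm_add_r: "(A + B) ** C = A ** C + B ** (C::'a::semiring_1^_^_)"
  by (simp add: matrix_matrix_mult_def vec_eq_iff sum.distrib distrib_right)
lemma mm_diff_r: "(A - B) ** C = A ** C - B ** (C::'a::ring_1^_^_)"
  by (simp add: matrix_matrix_mult_def vec_eq_iff sum_subtractf left_diff_distrib)
lemma mm_diff_l: "C ** (A - B) = C ** A - C ** (B::'a::ring_1^_^_)"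
  by (simp add: matrix_matrix_mult_def vec_eq_iff sum_subtractf right_diff_distrib)
lemma transpose_add: "transpose (A + B) = transpose A + transpose B"
  by (simp add: transpose_def vec_eq_iff)
lemma transpose_diff: "transpose (A - B) = transpose A - transpose B"
  by (simp add: transpose_def vec_eq_iff)

definition fip :: "complex^'c^'r \<Rightarrow> complex^'c^'r \<Rightarrow> complex" where
  "fip A B = (\<Sum>i\<in>UNIV. \<Sum>j\<in>UNIV. cnj (A$i$j) * B$i$j)"

lemma inner_fip: "inner A B = Re (fip A B)"
  by (simp add: fip_def inner_vec_def inner_complex_def)

lemma pyth: "fip A B = 0 \<Longrightarrow> (norm (A + B))\<^sup>2 = (norm A)\<^sup>2 + (norm B)\<^sup>2"
  by (rule norm_add_Pythagorean) (simp add: orthogonal_def inner_fip)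

lemma fip_mult_right: "fip A (B ** C) = fip (A ** ctrans C) B"
  unfolding fip_def matrix_matrix_mult_def ctrans_def
  apply (simp add: sum_distrib_left sum_distrib_right mult_ac)
  apply (rule sum.cong[OF refl])
  apply (rule sum.swap)
  done

lemma fip_mult_left: "fip A (B ** C) = fip (ctrans B ** A) C"
proof -
  have "fip A (B ** C) = (\<Sum>i\<in>UNIV. \<Sum>j\<in>UNIV. \<Sum>k\<in>UNIV. cnj (A$i$j) * (B$i$k * C$k$j))"
    by (simp add: fip_def matrix_matrix_mult_def sum_distrib_left)
  also have "\<dots> = (\<Sum>i\<in>UNIV. \<Sum>k\<in>UNIV. \<Sum>j\<in>UNIV. cnj (A$i$j) * (B$i$k * C$k$j))"
    by (rule sum.cong[OF refl], rule sum.swap)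
  also have "\<dots> = (\<Sum>k\<in>UNIV. \<Sum>i\<in>UNIV. \<Sum>j\<in>UNIV. cnj (A$i$j) * (B$i$k * C$k$j))"
    by (rule sum.swap)
  also have "\<dots> = (\<Sum>k\<in>UNIV. \<Sum>j\<in>UNIV. \<Sum>i\<in>UNIV. cnj (A$i$j) * (B$i$k * C$k$j))"
    by (rule sum.cong[OF refl], rule sum.swap)
  also have "\<dots> = fip (ctrans B ** A) C"
    by (simp add: fip_def matrix_matrix_mult_def ctrans_def sum_distrib_left cnj_sum mult_ac)
  finally show ?thesis .
qed

lemma fip_0[simp]: "fip 0 B = 0" by (simp add: fip_def)

lemma Pr_nth: "Pr b $ i $ j = (if i = j then 1 else 0) - b$i * cnj (b$j) / nn b"
  by (simp add: Pr_def mat_def matrix_matrix_mult_def sum_1)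

lemma ctrans_Pr: "ctrans (Pr b) = Pr b"
  by (simp add: vec_eq_iff ctrans_def Pr_nth mult.commute)
lemma ctrans_tPr: "ctrans (transpose (Pr b)) = transpose (Pr b)"
  by (simp add: vec_eq_iff ctrans_def transpose_def Pr_nth mult.commute)

lemma O1: assumes "z \<noteq> 0" shows "fip (H1 z w1) (Ht1 z K) = 0"
proof -
  have "fip (H1 z w1) (Ht1 z K) = fip (transpose (Pr (cconj z)) ** (H1 z w1 ** Pr (cconj z))) K"
    unfolding Ht1_def by (subst fip_mult_right, subst fip_mult_left, simp only: ctrans_Pr ctrans_tPr)
  also have "\<dots> = 0" using PHP[OF assms, of w1] by (simp add: matrix_mul_assoc)
  finally show ?thesis .
qed

lemma vdag_Pr: assumes "b \<noteq> 0" shows "vdag b ** Pr b = 0"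
proof -
  have "norm b \<noteq> 0" using assms by simp
  then show ?thesis
    unfolding matrix_eq by (simp add: mvsimps vec_eq_iff field_simps power2_eq_square del: norm_eq_zero)
qed

lemma Pr_ctr: assumes "z \<noteq> 0" shows "Pr z ** ctrans (colm w2 ** vdag z) = 0"
proof -
  have "norm z \<noteq> 0" using assms by simp
  then show ?thesis
    unfolding matrix_eq by (simp add: mvsimps vec_eq_iff field_simps power2_eq_square del: norm_eq_zero)
qed

lemma Pr_idem: "Pr b ** Pr b = Pr b"
proof (cases "b = 0")
  case True then show ?thesis by (simp add: Pr_def vdag_def)
next
  case False
  then have "norm b \<noteq> 0" by simp
  then show ?thesis
    unfolding matrix_eq by (simp add: mvsimps vec_eq_iff field_simps power2_eq_square del: norm_eq_zero)
qed

lemma mv_neg[simp]: "(- A) *v x = - (A *v (x::complex^_))"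
  by (simp add: vec_eq_iff matrix_vector_mult_def sum_negf)

lemma PMP: assumes "z \<noteq> 0" "x2 \<noteq> 0"
  shows "Pr z ** (H2 x1 x2 y z w1 w2 + Ht2 x1 x2 z K 0) ** Pr x2 = 0"
proof -
  have "(H2 x1 x2 y z w1 w2 + Ht2 x1 x2 z K 0) ** Pr x2 = ctrans (colm w2 ** vdag z) ** Pr x2"
    unfolding H2_def Ht2_def
    by (simp add: mm_add_r mm_diff_r matrix_mul_assoc[symmetric] vdag_Pr[OF assms(2)] Pr_idem)
  then show ?thesis
    by (simp add: matrix_mul_assoc[symmetric] Pr_idem) (simp add: matrix_mul_assoc Pr_ctr[OF assms(1)])
qed

lemma O2: assumes "z \<noteq> 0" "x2 \<noteq> 0"
  shows "fip (H2 x1 x2 y z w1 w2 + Ht2 x1 x2 z K 0) (Pr z ** R ** Pr x2) = 0"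
proof -
  have "fip (H2 x1 x2 y z w1 w2 + Ht2 x1 x2 z K 0) (Pr z ** R ** Pr x2)
     = fip (Pr z ** ((H2 x1 x2 y z w1 w2 + Ht2 x1 x2 z K 0) ** Pr x2)) R"
    by (subst fip_mult_right, subst fip_mult_left, simp only: ctrans_Pr)
  also have "\<dots> = 0" using PMP[OF assms, of x1 y w1 w2 K] by (simp add: matrix_mul_assoc)
  finally show ?thesis .
qed

lemma Ht2_split: "Ht2 x1 x2 z K R = Pr z ** R ** Pr x2 + Ht2 x1 x2 z K 0"
  unfolding Ht2_def by simp

lemma Ht2_alpha: assumes "z \<noteq> 0" "x1 = \<alpha> *s cconj z" shows "Ht2 x1 x2 z K 0 = 0"
proof -
  have "norm z \<noteq> 0" using assms by simp
  then show ?thesis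
    unfolding matrix_eq Ht2_def assms(2)
    by (simp add: mvsimps vec_eq_iff field_simps power2_eq_square del: norm_eq_zero)
qed



lemma cip_mv1: "cip (A *v x) z = cip x (ctrans A *v z)"
proof -
  have "cip (A *v x) z = cnj (cip z (A *v x))" by (simp add: cnj_cip)
  also have "\<dots> = cnj (cip (ctrans A *v z) x)" by (simp only: cip_mv)
  also have "\<dots> = cip x (ctrans A *v z)" by (simp add: cnj_cip)
  finally show ?thesis .
qed

lemma param_in_S:
  assumes z: "z \<noteq> 0" and x2: "x2 \<noteq> 0" and C: "cip x1 w1 + cip x2 w2 = cip y z"
    and KT: "transpose K = K"
  shows "(H1 z w1 + Ht1 z K, H2 x1 x2 y z w1 w2 + Ht2 x1 x2 z K R) \<in> Ssym x1 x2 y z w1 w2"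
  unfolding Ssym_def
  by (simp add: transpose_add H1_T Ht1_T[OF KT] matrix_vector_mult_add_rdistrib H2_x2[OF x2]
      Ht2_x2[OF x2] ctrans_mv vector_matrix_mult_add_rdistrib H1_left[OF z] Ht1_left[OF z]
      H2_left[OF z x2 C] Ht2_left[OF z])

lemma S_param:
  assumes z: "z \<noteq> 0" and x2: "x2 \<noteq> 0" and C: "cip x1 w1 + cip x2 w2 = cip y z"
    and D: "(D1, D2) \<in> Ssym x1 x2 y z w1 w2"
  shows "\<exists>K R. transpose K = K \<and> D1 = H1 z w1 + Ht1 z K \<and> D2 = H2 x1 x2 y z w1 w2 + Ht2 x1 x2 z K R"
proof -
  from D have T: "transpose D1 = D1" and E1: "D1 *v x1 + D2 *v x2 = y"
    and E2: "ctrans D1 *v z = w1" and E3: "ctrans D2 *v z = w2" by (auto simp: Ssym_def)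
  have nz: "norm z \<noteq> 0" "norm x2 \<noteq> 0" using z x2 by auto
  have L1: "cconj z v* D1 = cconj w1" using arg_cong[OF E2, of cconj] by (simp add: ctrans_mv)
  have L2: "cconj z v* D2 = cconj w2" using arg_cong[OF E3, of cconj] by (simp add: ctrans_mv)
  define K where "K = D1 - H1 z w1"
  have KT: "transpose K = K" using T by (simp add: K_def transpose_diff H1_T)
  have Ku: "cconj z v* K = 0"
    by (simp add: K_def vector_matrix_mult_diff_rdistrib L1 H1_left[OF z])
  have "transpose K *v cconj z = K *v cconj z" using KT by simp
  moreover have "transpose K *v cconj z = cconj z v* K" by (rule transpose_matrix_vector)
  ultimately have Ku2: "K *v cconj z = 0" using Ku by simp
  have HK: "Ht1 z K = K"
    unfolding matrix_eq Ht1_def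
    using nz by (simp add: mvsimps Ku2 cip_mv ctrans_mv Ku vec_eq_iff del: norm_eq_zero)
  have "H1 z w1 + Ht1 z K = D1" by (simp only: HK) (simp add: K_def)
  then have D1eq: "D1 = H1 z w1 + Ht1 z K" by simp
  define R where "R = D2 - H2 x1 x2 y z w1 w2 - Ht2 x1 x2 z K 0"
  have D2x: "D2 *v x2 = y - D1 *v x1" using E1 by (simp add: algebra_simps)
  have "R *v x2 = (y - D1 *v x1) - (y - H1 z w1 *v x1) + K *v x1"
    by (simp add: R_def matrix_vector_mult_diff_rdistrib H2_x2[OF x2] Ht2_x2[OF x2] HK D2x)
  also have "\<dots> = (H1 z w1 + K - D1) *v x1" by (simp add: algebra_simps)
  also have "\<dots> = 0" by (simp add: K_def)
  finally have Rx: "R *v x2 = 0" .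
  have Ru: "cconj z v* R = 0"
    by (simp add: R_def vector_matrix_mult_diff_rdistrib L2 H2_left[OF z x2 C] Ht2_left[OF z])
  have PR: "Pr z ** R ** Pr x2 = R"
    unfolding matrix_eq
    using nz by (simp add: mvsimps Rx cip_mv ctrans_mv Ru vec_eq_iff del: norm_eq_zero)
  have "H2 x1 x2 y z w1 w2 + Ht2 x1 x2 z K R = H2 x1 x2 y z w1 w2 + R + Ht2 x1 x2 z K 0"
    by (subst Ht2_split) (simp add: PR)
  then have D2eq: "D2 = H2 x1 x2 y z w1 w2 + Ht2 x1 x2 z K R" by (simp add: R_def)
  show ?thesis using KT D1eq D2eq by blast
qed

lemma frob_decomp:
  assumes z: "z \<noteq> 0" and x2: "x2 \<noteq> 0"
  shows "frob2 (H1 z w1 + Ht1 z K, H2 x1 x2 y z w1 w2 + Ht2 x1 x2 z K R)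
    = (norm (H1 z w1))\<^sup>2 + (norm (Ht1 z K))\<^sup>2 + (norm (H2 x1 x2 y z w1 w2 + Ht2 x1 x2 z K 0))\<^sup>2
      + (norm (Pr z ** R ** Pr x2))\<^sup>2"
proof -
  have a: "(norm (H1 z w1 + Ht1 z K))\<^sup>2 = (norm (H1 z w1))\<^sup>2 + (norm (Ht1 z K))\<^sup>2"
    by (rule pyth[OF O1[OF z]])
  have eq: "H2 x1 x2 y z w1 w2 + Ht2 x1 x2 z K R = (H2 x1 x2 y z w1 w2 + Ht2 x1 x2 z K 0) + Pr z ** R ** Pr x2"
    by (subst Ht2_split) (simp add: algebra_simps)
  have b: "(norm (H2 x1 x2 y z w1 w2 + Ht2 x1 x2 z K R))\<^sup>2 =
      (norm (H2 x1 x2 y z w1 w2 + Ht2 x1 x2 z K 0))\<^sup>2 + (norm (Pr z ** R ** Pr x2))\<^sup>2"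
    unfolding eq by (rule pyth[OF O2[OF z x2]])
  show ?thesis unfolding frob2_def using a b by simp
qed



lemma transpose_zero[simp]: "transpose (0::'a::zero^'n^'m) = 0" by (simp add: transpose_def vec_eq_iff)

lemma Ht1_0[simp]: "Ht1 z 0 = 0" by (simp add: Ht1_def)
lemma Ht2_00[simp]: "Ht2 x1 x2 z 0 0 = 0" by (simp add: Ht2_def)

theorem theorem3p4:
  fixes x1 y z w1 :: "complex^'n" and x2 w2 :: "complex^'m"
  assumes "x2 \<noteq> 0" and "z \<noteq> 0"
  defines "S \<equiv> Ssym x1 x2 y z w1 w2"
  shows "(S \<noteq> {} \<longleftrightarrow> cip x1 w1 + cip x2 w2 = cip y z)
    \<and> (cip x1 w1 + cip x2 w2 = cip y z \<longrightarrow>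
        S = {(H1 z w1 + Ht1 z K, H2 x1 x2 y z w1 w2 + Ht2 x1 x2 z K R) | K R.
               transpose K = K}
      \<and> Inf (frob2 ` S) \<ge> (norm (H1 z w1))\<^sup>2
            + Inf {(norm (H2 x1 x2 y z w1 w2 + Ht2 x1 x2 z K 0))\<^sup>2 | K. transpose K = K}
      \<and> (\<forall>\<alpha>::complex. \<alpha> \<noteq> 0 \<and> x1 = \<alpha> *s cconj z \<longrightarrow>
            Inf (frob2 ` S) = (norm (H1 z w1))\<^sup>2
              + Inf {(norm (H2 x1 x2 y z w1 w2 + Ht2 x1 x2 z K 0))\<^sup>2 | K. transpose K = K}
          \<and> Inf (frob2 ` S) = (norm (H1 z w1))\<^sup>2 + (norm (H2 x1 x2 y z w1 w2))\<^sup>2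
          \<and> (H1 z w1, H2 x1 x2 y z w1 w2) \<in> S
          \<and> frob2 (H1 z w1, H2 x1 x2 y z w1 w2) = Inf (frob2 ` S)
          \<and> (\<forall>D\<in>S. frob2 D = Inf (frob2 ` S) \<longrightarrow> D = (H1 z w1, H2 x1 x2 y z w1 w2))))"
proof -
  note x2 = assms(1) and z = assms(2)
  define C where "C \<longleftrightarrow> cip x1 w1 + cip x2 w2 = cip y z"
  have nec: "C" if "S \<noteq> {}"
  proof -
    obtain D1 D2 where D: "(D1, D2) \<in> S" using \<open>S \<noteq> {}\<close> by auto
    then have E1: "D1 *v x1 + D2 *v x2 = y" and E2: "ctrans D1 *v z = w1"
      and E3: "ctrans D2 *v z = w2" by (auto simp: S_def Ssym_def)
    have "cip y z = cip (D1 *v x1) z + cip (D2 *v x2) z" using E1 by auto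
    also have "\<dots> = cip x1 w1 + cip x2 w2" by (simp add: cip_mv1 E2 E3)
    finally show ?thesis unfolding C_def by simp
  qed
  have HS: "(H1 z w1, H2 x1 x2 y z w1 w2) \<in> S" if C
    using param_in_S[OF z x2 that[unfolded C_def], of 0 0] by (simp add: S_def)
  have part1: "S \<noteq> {} \<longleftrightarrow> C" using nec HS by blast
  have part2: "S = {(H1 z w1 + Ht1 z K, H2 x1 x2 y z w1 w2 + Ht2 x1 x2 z K R) | K R.
               transpose K = K}
      \<and> Inf (frob2 ` S) \<ge> (norm (H1 z w1))\<^sup>2
            + Inf {(norm (H2 x1 x2 y z w1 w2 + Ht2 x1 x2 z K 0))\<^sup>2 | K. transpose K = K}
      \<and> (\<forall>\<alpha>::complex. \<alpha> \<noteq> 0 \<and> x1 = \<alpha> *s cconj z \<longrightarrow>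
            Inf (frob2 ` S) = (norm (H1 z w1))\<^sup>2
              + Inf {(norm (H2 x1 x2 y z w1 w2 + Ht2 x1 x2 z K 0))\<^sup>2 | K. transpose K = K}
          \<and> Inf (frob2 ` S) = (norm (H1 z w1))\<^sup>2 + (norm (H2 x1 x2 y z w1 w2))\<^sup>2
          \<and> (H1 z w1, H2 x1 x2 y z w1 w2) \<in> S
          \<and> frob2 (H1 z w1, H2 x1 x2 y z w1 w2) = Inf (frob2 ` S)
          \<and> (\<forall>D\<in>S. frob2 D = Inf (frob2 ` S) \<longrightarrow> D = (H1 z w1, H2 x1 x2 y z w1 w2)))"
    if C: C
  proof -
    have C': "cip x1 w1 + cip x2 w2 = cip y z" using C unfolding C_def .
    let ?P = "{(H1 z w1 + Ht1 z K, H2 x1 x2 y z w1 w2 + Ht2 x1 x2 z K R) | K R. transpose K = K}"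
    have Seq: "S = ?P"
    proof (rule set_eqI, rule iffI)
      fix D assume "D \<in> S"
      obtain D1 D2 where DD: "D = (D1, D2)" by fastforce
      from S_param[OF z x2 C'] \<open>D \<in> S\<close> DD obtain K R where
        "transpose K = K" "D1 = H1 z w1 + Ht1 z K" "D2 = H2 x1 x2 y z w1 w2 + Ht2 x1 x2 z K R"
        unfolding S_def by blast
      then show "D \<in> ?P" using DD by blast
    next
      fix D assume "D \<in> ?P"
      then obtain K R where "transpose K = K"
        "D = (H1 z w1 + Ht1 z K, H2 x1 x2 y z w1 w2 + Ht2 x1 x2 z K R)" by blast
      then show "D \<in> S" using param_in_S[OF z x2 C'] unfolding S_def by blast
    qed
    define T where "T = {(norm (H2 x1 x2 y z w1 w2 + Ht2 x1 x2 z K 0))\<^sup>2 | K. transpose K = K}"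
    have t0: "transpose (0::complex^'n^'n) = 0" by (simp add: transpose_def vec_eq_iff)
    have Tne: "T \<noteq> {}" using t0 unfolding T_def by blast
    have bddT: "bdd_below T" unfolding T_def bdd_below_def by (intro exI[of _ 0]) auto
    have Tlow: "Inf T \<le> (norm (H2 x1 x2 y z w1 w2 + Ht2 x1 x2 z K 0))\<^sup>2" if "transpose K = K" for K
      by (rule cInf_lower[OF _ bddT]) (use that in \<open>auto simp: T_def\<close>)
    have frob_nn: "frob2 D \<ge> 0" for D :: "(complex^'n^'n) \<times> (complex^'m^'n)"
      by (simp add: frob2_def)
    have bddS: "bdd_below (frob2 ` S)" unfolding bdd_below_def using frob_nn by blast
    have FSne: "frob2 ` S \<noteq> {}" using HS[OF C] by blast
    have bound: "frob2 D \<ge> (norm (H1 z w1))\<^sup>2 + Inf T" if "D \<in> S" for D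
    proof -
      from that Seq obtain K R where KT: "transpose K = K"
        and DD: "D = (H1 z w1 + Ht1 z K, H2 x1 x2 y z w1 w2 + Ht2 x1 x2 z K R)" by blast
      have "frob2 D = (norm (H1 z w1))\<^sup>2 + (norm (Ht1 z K))\<^sup>2 + (norm (H2 x1 x2 y z w1 w2 + Ht2 x1 x2 z K 0))\<^sup>2
        + (norm (Pr z ** R ** Pr x2))\<^sup>2" unfolding DD by (rule frob_decomp[OF z x2])
      then show ?thesis using Tlow[OF KT] by (smt (verit) zero_le_power2)
    qed
    have lower: "Inf (frob2 ` S) \<ge> (norm (H1 z w1))\<^sup>2 + Inf T"
      by (rule cInf_greatest[OF FSne]) (use bound in blast)
    have alpha: "Inf (frob2 ` S) = (norm (H1 z w1))\<^sup>2 + Inf T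
          \<and> Inf (frob2 ` S) = (norm (H1 z w1))\<^sup>2 + (norm (H2 x1 x2 y z w1 w2))\<^sup>2
          \<and> (H1 z w1, H2 x1 x2 y z w1 w2) \<in> S
          \<and> frob2 (H1 z w1, H2 x1 x2 y z w1 w2) = Inf (frob2 ` S)
          \<and> (\<forall>D\<in>S. frob2 D = Inf (frob2 ` S) \<longrightarrow> D = (H1 z w1, H2 x1 x2 y z w1 w2))"
      if a: "\<alpha> \<noteq> 0 \<and> x1 = \<alpha> *s cconj z" for \<alpha> :: complex
    proof -
      have H0: "Ht2 x1 x2 z K 0 = 0" for K using Ht2_alpha[OF z] a by blast
      have m: "(norm (H2 x1 x2 y z w1 w2))\<^sup>2 \<in> T"
        unfolding T_def by (rule CollectI, rule exI[of _ 0], simp add: H0)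
      have "T \<subseteq> {(norm (H2 x1 x2 y z w1 w2))\<^sup>2}" unfolding T_def by (auto simp: H0)
      then have "T = {(norm (H2 x1 x2 y z w1 w2))\<^sup>2}" using m by blast
      then have IT: "Inf T = (norm (H2 x1 x2 y z w1 w2))\<^sup>2" by simp
      have fH: "frob2 (H1 z w1, H2 x1 x2 y z w1 w2) = (norm (H1 z w1))\<^sup>2 + (norm (H2 x1 x2 y z w1 w2))\<^sup>2"
        by (simp add: frob2_def)
      have "Inf (frob2 ` S) \<le> frob2 (H1 z w1, H2 x1 x2 y z w1 w2)"
        by (rule cInf_lower[OF imageI[OF HS[OF C]] bddS])
      then have eq: "Inf (frob2 ` S) = (norm (H1 z w1))\<^sup>2 + (norm (H2 x1 x2 y z w1 w2))\<^sup>2"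
        using lower IT fH by linarith
      have uniq: "D = (H1 z w1, H2 x1 x2 y z w1 w2)" if "D \<in> S" "frob2 D = Inf (frob2 ` S)" for D
      proof -
        from that(1) Seq obtain K R where KT: "transpose K = K"
          and DD: "D = (H1 z w1 + Ht1 z K, H2 x1 x2 y z w1 w2 + Ht2 x1 x2 z K R)" by blast
        have "frob2 D = (norm (H1 z w1))\<^sup>2 + (norm (Ht1 z K))\<^sup>2 + (norm (H2 x1 x2 y z w1 w2))\<^sup>2
          + (norm (Pr z ** R ** Pr x2))\<^sup>2" unfolding DD frob_decomp[OF z x2] H0 by simp
        then have "(norm (Ht1 z K))\<^sup>2 + (norm (Pr z ** R ** Pr x2))\<^sup>2 = 0" using that(2) eq by simp
        then have "(norm (Ht1 z K))\<^sup>2 = 0" "(norm (Pr z ** R ** Pr x2))\<^sup>2 = 0"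
          by (smt (verit) zero_le_power2)+
        then have h1: "Ht1 z K = 0" and h2: "Pr z ** R ** Pr x2 = 0" by auto
        have "Ht2 x1 x2 z K R = 0" by (subst Ht2_split) (simp add: h2 H0)
        then show ?thesis using DD h1 by simp
      qed
      show ?thesis
      proof (intro conjI ballI impI)
        show "Inf (frob2 ` S) = (norm (H1 z w1))\<^sup>2 + Inf T" using eq IT by simp
        show "Inf (frob2 ` S) = (norm (H1 z w1))\<^sup>2 + (norm (H2 x1 x2 y z w1 w2))\<^sup>2" by (rule eq)
        show "(H1 z w1, H2 x1 x2 y z w1 w2) \<in> S" by (rule HS[OF C])
        show "frob2 (H1 z w1, H2 x1 x2 y z w1 w2) = Inf (frob2 ` S)" using eq fH by simp
        show "D = (H1 z w1, H2 x1 x2 y z w1 w2)" if "D \<in> S" "frob2 D = Inf (frob2 ` S)" for D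
          by (rule uniq[OF that])
      qed
    qed
    show ?thesis using Seq lower alpha unfolding T_def by blast
  qed
  show ?thesis using part1 part2 unfolding C_def by blast
qed


end
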